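(* Let $m,n\in\mathbb{N}$ and let $\psi:\mathbb{F}[X]^m\to\{k^r:r\in\mathbb{Z}\}\cup\{0\}$ satisfy $\psi(\mathbf{q})\le1$ for all $\mathbf{q}$ and $\psi(\mathbf{q})>0$ for infinitely many $\mathbf{q}$. Then $$\min\{\delta(\psi),n\}\ge\min\{\eta(\psi),n\}.$$
   Context: $\mathbb{F}$ is a finite field with $k$ elements; for $\mathbf{q}\in\mathbb{F}[X]^m$, $|\mathbf{q}|_\infty=\max_i k^{\deg q_i}$. $\eta(\psi)=\inf\{\eta\in\mathbb{R}:\sum_{\mathbf{q}\in\mathbb{F}[X]^m\setminus\{0\}}|\mathbf{q}|_\infty^n(\psi(\mathbf{q})/|\mathbf{q}|_\infty)^\eta<\infty\}$. For $N>0$ and $v>0$: $C(N,v;\psi)=\#\{\mathbf{q}\in\mathbb{F}[X]^m\setminus\{0\}:|\mathbf{q}|_\infty\le N,\ \psi(\mathbf{q})\ge|\mathbf{q}|_\infty^{-v}\}$; when $C(N,v;\psi)\to\infty$, $\gamma(v;\psi)=\sup\{\gamma\in\mathbb{R}:\limsup_{N\to\infty}C(N,v;\psi)N^{-\gamma}>0\}$; $\delta(v;\psi)=\frac{n+\gamma(v;\psi)}{v+1}$ if $C(N,v;\psi)\to\infty$ as $N\to\infty$, and $\delta(v;\psi)=0$ otherwise; $\delta(\psi)=\sup_{v\ge0}\delta(v;\psi)$. *)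

theory Defs
  imports "HOL-Analysis.Analysis" "HOL-Computational_Algebra.Polynomial" "HOL-Library.Extended_Real"
begin

definition pabs :: "'a::{finite,field} poly \<Rightarrow> real" where
  "pabs p = (if p = 0 then 0 else real CARD('a) ^ degree p)"

definition vnorm :: "('a::{finite,field} poly ^ 'm::finite) \<Rightarrow> real" where
  "vnorm q = Max (range (\<lambda>i. pabs (q $ i)))"

definition eta_exp :: "nat \<Rightarrow> (('a::{finite,field} poly ^ 'm::finite) \<Rightarrow> real) \<Rightarrow> ereal" where
  "eta_exp n \<psi> = Inf (ereal ` {e::real.
      (\<lambda>q. vnorm q ^ n * (\<psi> q / vnorm q) powr e) summable_on (UNIV - {0})})"

definition count_C :: "real \<Rightarrow> real \<Rightarrow> (('a::{finite,field} poly ^ 'm::finite) \<Rightarrow> real) \<Rightarrow> nat" where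
  "count_C N v \<psi> = card {q. q \<noteq> 0 \<and> vnorm q \<le> N \<and> \<psi> q \<ge> vnorm q powr (- v)}"

definition gamma_exp :: "real \<Rightarrow> (('a::{finite,field} poly ^ 'm::finite) \<Rightarrow> real) \<Rightarrow> ereal" where
  "gamma_exp v \<psi> = Sup (ereal ` {g::real.
      Limsup at_top (\<lambda>N::real. ereal (real (count_C N v \<psi>) * N powr (- g))) > 0})"

definition delta_v :: "nat \<Rightarrow> real \<Rightarrow> (('a::{finite,field} poly ^ 'm::finite) \<Rightarrow> real) \<Rightarrow> ereal" where
  "delta_v n v \<psi> =
     (if filterlim (\<lambda>N::real. real (count_C N v \<psi>)) at_top at_top
      then (ereal (real n) + gamma_exp v \<psi>) / ereal (v + 1) else 0)"

definition delta_exp :: "nat \<Rightarrow> (('a::{finite,field} poly ^ 'm::finite) \<Rightarrow> real) \<Rightarrow> ereal" where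
  "delta_exp n \<psi> = (SUP v\<in>{0::real..}. delta_v n v \<psi>)"

end

theory Submission imports Defs begin

lemma card_ge2: "CARD('a::{finite,field}) \<ge> 2"
proof -
  have "card {0::'a, 1} = 2" by simp
  moreover have "card {0::'a, 1} \<le> CARD('a)" by (rule card_mono) auto
  ultimately show ?thesis by simp
qed

lemma poly_bounded_card:
  "finite {p::'a::{finite,field} poly. degree p \<le> D} \<and> card {p::'a poly. degree p \<le> D} \<le> CARD('a) ^ (D+1)"
proof -
  let ?L = "{xs::'a list. set xs \<subseteq> UNIV \<and> length xs = D+1}"
  have sub: "{p::'a poly. degree p \<le> D} \<subseteq> Poly ` ?L"
  proof
    fix p :: "'a poly" assume "p \<in> {p. degree p \<le> D}"
    hence d: "degree p \<le> D" by simp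
    have len: "length (coeffs p) \<le> D + 1"
      using d by (cases "p = 0") (auto simp: length_coeffs)
    let ?xs = "coeffs p @ replicate (D+1 - length (coeffs p)) 0"
    have "length ?xs = D+1" using len by simp
    moreover have "Poly ?xs = p" by simp
    ultimately show "p \<in> Poly ` ?L" by (metis (mono_tags, lifting) image_eqI mem_Collect_eq subset_UNIV)
  qed
  have fin: "finite ?L" using finite_lists_length_eq[of "UNIV::'a set"] by simp
  have "card ?L = CARD('a) ^ (D+1)" using card_lists_length_eq[of "UNIV::'a set"] by simp
  then show ?thesis using sub fin
    by (metis (no_types, lifting) card_image_le card_mono finite_imageI finite_subset order_trans)
qed

lemma vec_bounded_card:
  "finite {q::'a::{finite,field} poly ^ 'm::finite. \<forall>i. degree (q $ i) \<le> D} \<and>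
   card {q::'a poly ^ 'm. \<forall>i. degree (q $ i) \<le> D} \<le> CARD('a) ^ ((D+1) * CARD('m))"
proof -
  let ?P = "{p::'a poly. degree p \<le> D}"
  let ?S = "PiE (UNIV::'m set) (\<lambda>_. ?P)"
  have sub: "{q::'a poly ^ 'm. \<forall>i. degree (q $ i) \<le> D} \<subseteq> vec_lambda ` ?S"
  proof
    fix q :: "'a poly ^ 'm" assume "q \<in> {q. \<forall>i. degree (q $ i) \<le> D}"
    hence "(\<lambda>i. q $ i) \<in> ?S" by auto
    moreover have "vec_lambda (\<lambda>i. q $ i) = q" by simp
    ultimately show "q \<in> vec_lambda ` ?S" by force
  qed
  have finP: "finite ?P" using poly_bounded_card by blast
  have finS: "finite ?S" using finP by (intro finite_PiE) auto
  have "card ?S = card ?P ^ CARD('m)" by (simp add: card_PiE)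
  also have "\<dots> \<le> (CARD('a) ^ (D+1)) ^ CARD('m)" using poly_bounded_card by (intro power_mono) auto
  also have "\<dots> = CARD('a) ^ ((D+1) * CARD('m))" by (rule power_mult[symmetric])
  finally have "card ?S \<le> CARD('a) ^ ((D+1) * CARD('m))" .
  then show ?thesis using sub finS
    by (meson card_image_le card_mono finite_imageI finite_subset order_trans)
qed

lemma pabs_le_vnorm: "pabs (q $ i) \<le> vnorm q"
  unfolding vnorm_def by (rule Max_ge) auto

lemma vnorm_nonneg: "vnorm q \<ge> 0"
proof -
  have "0 \<le> pabs (q $ undefined)" by (simp add: pabs_def)
  thus ?thesis using pabs_le_vnorm[of q undefined] by linarith
qed

lemma vnorm_attained: "\<exists>i. vnorm q = pabs (q $ i)"
proof -
  have "Max (range (\<lambda>i. pabs (q $ i))) \<in> range (\<lambda>i. pabs (q $ i))"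
    by (rule Max_in) auto
  then obtain i where "Max (range (\<lambda>i. pabs (q $ i))) = pabs (q $ i)" by blast
  then show ?thesis unfolding vnorm_def by blast
qed

lemma vnorm_level:
  fixes q :: "'a::{finite,field} poly ^ 'm::finite"
  assumes "q \<noteq> 0" shows "\<exists>d. vnorm q = real CARD('a) ^ d"
proof -
  obtain j where j: "q $ j \<noteq> 0" using assms by (metis vec_eq_iff zero_index)
  have "pabs (q $ j) \<ge> 1" using j card_ge2[where 'a='a] by (simp add: pabs_def)
  hence pos: "vnorm q \<ge> 1" using pabs_le_vnorm[of q j] by linarith
  obtain i where i: "vnorm q = pabs (q $ i)" using vnorm_attained by blast
  show ?thesis
  proof (cases "q $ i = 0")
    case True then show ?thesis using i pos by (simp add: pabs_def)
  next
    case False then show ?thesis using i by (auto simp: pabs_def)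
  qed
qed

lemma vnorm_ge1:
  fixes q :: "'a::{finite,field} poly ^ 'm::finite"
  assumes "q \<noteq> 0" shows "vnorm q \<ge> 1"
proof -
  obtain d where "vnorm q = real CARD('a) ^ d" using vnorm_level[OF assms] by blast
  then show ?thesis using card_ge2[where 'a='a] by simp
qed

lemma vnorm_le_pow:
  fixes q :: "'a::{finite,field} poly ^ 'm::finite"
  assumes "vnorm q \<le> real CARD('a) ^ D" shows "degree (q $ i) \<le> D"
proof (cases "q $ i = 0")
  case True then show ?thesis by simp
next
  case False
  have "real CARD('a) ^ degree (q $ i) \<le> real CARD('a) ^ D"
    using pabs_le_vnorm[of q i] assms False by (simp add: pabs_def)
  then show ?thesis using card_ge2[where 'a='a]
    by (intro power_le_imp_le_exp[of "real CARD('a)"]) auto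
qed

lemma vball_sub:
  "{q::'a::{finite,field} poly ^ 'm::finite. vnorm q \<le> real CARD('a) ^ D} \<subseteq> {q. \<forall>i. degree (q $ i) \<le> D}"
  using vnorm_le_pow by blast

lemma vball_card:
  "finite {q::'a::{finite,field} poly ^ 'm::finite. vnorm q \<le> real CARD('a) ^ D} \<and>
   card {q::'a poly ^ 'm. vnorm q \<le> real CARD('a) ^ D} \<le> CARD('a) ^ ((D+1) * CARD('m))"
  using vec_bounded_card[where 'a='a and 'm='m and D=D] vball_sub[where 'a='a and 'm='m and D=D]
  by (meson card_mono finite_subset order_trans)

lemma vball_finite:
  "finite {q::'a::{finite,field} poly ^ 'm::finite. vnorm q \<le> N}"
proof -
  have "real CARD('a) > 1" using card_ge2[where 'a='a] by simp
  then obtain D where "N < real CARD('a) ^ D" using real_arch_pow by blast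
  hence "{q::'a poly ^ 'm. vnorm q \<le> N} \<subseteq> {q. vnorm q \<le> real CARD('a) ^ D}" by auto
  then show ?thesis using vball_card finite_subset by blast
qed

lemma sum_lemma:
  fixes A :: "('a::{finite,field} poly ^ 'm::finite) set"
  assumes A0: "0 \<notin> A"
    and cnt: "\<And>d. d \<ge> dz \<Longrightarrow> real (card {q\<in>A. vnorm q \<le> real CARD('a)^d}) \<le> C * real CARD('a) powr (g * real d)"
    and gs: "g < s"
  shows "(\<lambda>q. vnorm q powr (-s)) summable_on A"
proof -
  define k where "k = real CARD('a)"
  have k1: "k > 1" using card_ge2[where 'a='a] by (simp add: k_def)
  define lev where "lev q = (SOME d. vnorm q = k ^ d)" for q :: "'a poly ^ 'm"
  have lev: "vnorm q = k ^ lev q" if "q \<in> A" for q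
  proof -
    have "q \<noteq> 0" using that A0 by auto
    then have "\<exists>d. vnorm q = k ^ d" using vnorm_level unfolding k_def by blast
    then show ?thesis unfolding lev_def by (rule someI_ex)
  qed
  have fq: "vnorm q powr (-s) = k powr (- s * real (lev q))" if "q \<in> A" for q
    using lev[OF that] k1 by (simp add: powr_realpow[symmetric] powr_powr mult.commute)
  define c where "c d = real (card {q\<in>A. vnorm q \<le> k^d}) * k powr (- s * real d)" for d :: nat
  have c_nn: "c d \<ge> 0" for d unfolding c_def by simp
  define r where "r = k powr (g - s)"
  have r: "0 < r" "r < 1" using k1 gs by (auto simp: r_def intro!: powr_less_one)
  have "summable (\<lambda>d. C * r ^ d)" using r by (intro summable_mult summable_geometric) auto
  then have sc: "summable c"
  proof (rule summable_comparison_test'[where N=dz])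
    fix d assume "d \<ge> dz"
    have "norm (c d) = c d" using c_nn by simp
    also have "\<dots> \<le> C * k powr (g * real d) * k powr (- s * real d)"
      unfolding c_def using cnt[OF \<open>d \<ge> dz\<close>] by (intro mult_right_mono) (auto simp: k_def)
    also have "\<dots> = C * r ^ d"
      using k1 by (simp add: r_def powr_realpow[symmetric] powr_powr powr_add[symmetric] algebra_simps)
    finally show "norm (c d) \<le> C * r ^ d" .
  qed
  have bound: "sum (\<lambda>q. vnorm q powr (-s)) F \<le> suminf c" if F: "F \<subseteq> A" "finite F" for F
  proof -
    define D where "D = Max (lev ` F)"
    have img: "lev ` F \<subseteq> {..D}" using F by (auto simp: D_def)
    have "sum (\<lambda>q. vnorm q powr (-s)) F = (\<Sum>d\<le>D. sum (\<lambda>q. vnorm q powr (-s)) {q. q \<in> F \<and> lev q = d})"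
      using sum.group[OF F(2) _ img, of "\<lambda>q. vnorm q powr (-s)"] by simp
    also have "\<dots> \<le> (\<Sum>d\<le>D. c d)"
    proof (rule sum_mono)
      fix d assume "d \<in> {..D}"
      have "sum (\<lambda>q. vnorm q powr (-s)) {q. q \<in> F \<and> lev q = d} =
            sum (\<lambda>q. k powr (- s * real d)) {q. q \<in> F \<and> lev q = d}"
        using F fq by (intro sum.cong) auto
      also have "\<dots> = real (card {q. q \<in> F \<and> lev q = d}) * k powr (- s * real d)" by simp
      also have "\<dots> \<le> c d" unfolding c_def
      proof (intro mult_right_mono)
        have "{q. q \<in> F \<and> lev q = d} \<subseteq> {q\<in>A. vnorm q \<le> k^d}" using F lev by auto
        moreover have "finite {q\<in>A. vnorm q \<le> k^d}"
          using vball_finite[where 'a='a and 'm='m and N="k^d"] by (rule finite_subset[rotated]) auto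
        ultimately show "real (card {q. q \<in> F \<and> lev q = d}) \<le> real (card {q\<in>A. vnorm q \<le> k^d})"
          by (simp add: card_mono)
      qed simp
      finally show "sum (\<lambda>q. vnorm q powr (-s)) {q. q \<in> F \<and> lev q = d} \<le> c d" .
    qed
    also have "\<dots> \<le> suminf c" using sc c_nn by (intro sum_le_suminf) auto
    finally show ?thesis .
  qed
  show ?thesis
    by (rule nonneg_bdd_above_summable_on) (use bound in \<open>auto intro!: bdd_aboveI\<close>)
qed

lemma gam_bound:
  fixes G :: ereal
  assumes "(ereal (real n) + G) / ereal (b+1) \<le> ereal d" "d < e'" "b \<ge> 0"
  shows "G < ereal (e' * (b+1) - real n)"
proof (cases G)
  case (real c)
  then have "(real n + c) / (b+1) \<le> d" using assms(1,3) by simp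
  then have "real n + c \<le> d * (b+1)" using assms(3) by (simp add: divide_le_eq)
  moreover have "d * (b+1) < e' * (b+1)" using assms(2,3) by simp
  ultimately show ?thesis using real by simp
next
  case PInf then show ?thesis using assms(1,3) by simp
next
  case MInf then show ?thesis by simp
qed

lemma fbound:
  fixes x p a e :: real
  assumes "x \<ge> 1" "0 \<le> p" "p \<le> x powr (-a)" "e \<ge> 0"
  shows "x ^ n * (p / x) powr e \<le> x powr (real n - (a+1)*e)"
proof (cases "p = 0")
  case True then show ?thesis by simp
next
  case False
  have "p / x \<le> x powr (-a) / x" using assms by (simp add: divide_right_mono)
  also have "\<dots> = x powr (-a-1)" using assms(1) by (simp add: powr_diff)
  finally have "(p / x) powr e \<le> (x powr (-a-1)) powr e"
    using assms by (intro powr_mono2) auto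
  also have "\<dots> = x powr ((-a-1)*e)" by (simp add: powr_powr)
  finally have "x ^ n * (p / x) powr e \<le> x powr (real n) * x powr ((-a-1)*e)"
    using assms(1) by (simp add: powr_realpow mult_left_mono)
  also have "\<dots> = x powr (real n - (a+1)*e)" by (simp add: powr_add[symmetric] algebra_simps)
  finally show ?thesis .
qed

lemma count_tendsto:
  fixes \<psi> :: "('a::{finite,field} poly ^ 'm::finite) \<Rightarrow> real"
  assumes "infinite {q. q \<noteq> 0 \<and> \<psi> q \<ge> vnorm q powr (-v)}"
  shows "filterlim (\<lambda>N::real. real (count_C N v \<psi>)) at_top at_top"
proof (subst filterlim_at_top, intro allI)
  fix Z :: real
  let ?A = "{q. q \<noteq> 0 \<and> \<psi> q \<ge> vnorm q powr (-v)}"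
  obtain B where B: "finite B" "card B = nat \<lceil>Z\<rceil>" "B \<subseteq> ?A"
    using infinite_arbitrarily_large[OF assms] by blast
  define N0 where "N0 = Max (insert 0 (vnorm ` B))"
  have "Z \<le> real (count_C N v \<psi>)" if "N \<ge> N0" for N
  proof -
    have "B \<subseteq> {q. q \<noteq> 0 \<and> vnorm q \<le> N \<and> \<psi> q \<ge> vnorm q powr (-v)}"
    proof
      fix q assume "q \<in> B"
      then have "vnorm q \<le> N0" unfolding N0_def using B(1) by (intro Max_ge) auto
      then show "q \<in> {q. q \<noteq> 0 \<and> vnorm q \<le> N \<and> \<psi> q \<ge> vnorm q powr (-v)}" using \<open>q \<in> B\<close> B(3) that by auto
    qed
    moreover have "finite {q. q \<noteq> 0 \<and> vnorm q \<le> N \<and> \<psi> q \<ge> vnorm q powr (-v)}"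
      using vball_finite[where 'a='a and 'm='m and N=N] by (rule finite_subset[rotated]) auto
    ultimately have "card B \<le> count_C N v \<psi>" unfolding count_C_def by (rule card_mono[rotated])
    then show ?thesis using B(2) by linarith
  qed
  then show "eventually (\<lambda>N. Z \<le> real (count_C N v \<psi>)) at_top"
    using eventually_at_top_linorder by blast
qed

lemma bin_lemma:
  fixes \<psi> :: "('a::{finite,field} poly ^ 'm::finite) \<Rightarrow> real" and n :: nat
  assumes H: "\<And>v. v \<ge> 0 \<Longrightarrow> delta_v n v \<psi> \<le> ereal d"
    and de: "d < e'" "e' < e" "0 < e'"
    and psi_nn: "\<And>q. \<psi> q \<ge> 0"
    and ab: "0 \<le> a" "a \<le> b" "e' * (b - a) \<le> (e - e') / 2"
  shows "(\<lambda>q. vnorm q ^ n * (\<psi> q / vnorm q) powr e) summable_on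
           {q. q \<noteq> 0 \<and> \<psi> q \<ge> vnorm q powr (-b) \<and> \<psi> q \<le> vnorm q powr (-a)}"
proof -
  let ?S = "{q. q \<noteq> 0 \<and> \<psi> q \<ge> vnorm q powr (-b) \<and> \<psi> q \<le> vnorm q powr (-a)}"
  let ?A = "{q. q \<noteq> 0 \<and> \<psi> q \<ge> vnorm q powr (-b)}"
  define k where "k = real CARD('a)"
  have k1: "k > 1" using card_ge2[where 'a='a] by (simp add: k_def)
  have sub: "?S \<subseteq> ?A" by auto
  show ?thesis
  proof (cases "finite ?A")
    case True
    then show ?thesis using sub by (intro summable_on_finite) (rule finite_subset)
  next
    case False
    have tl: "filterlim (\<lambda>N::real. real (count_C N b \<psi>)) at_top at_top"
      using count_tendsto[OF False] .
    have "delta_v n b \<psi> = (ereal (real n) + gamma_exp b \<psi>) / ereal (b+1)"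
      unfolding delta_v_def using tl by simp
    then have "gamma_exp b \<psi> < ereal (e' * (b+1) - real n)"
      using H[of b] ab de by (intro gam_bound[where d=d]) auto
    from ereal_dense2[OF this] obtain g where g0: "gamma_exp b \<psi> < ereal g" "ereal g < ereal (e' * (b+1) - real n)"
      by blast
    then have g: "gamma_exp b \<psi> < ereal g" "g < e' * (b+1) - real n" by auto
    have notin: "\<not> (Limsup at_top (\<lambda>N::real. ereal (real (count_C N b \<psi>) * N powr (- g))) > 0)"
    proof
      assume "Limsup at_top (\<lambda>N::real. ereal (real (count_C N b \<psi>) * N powr (- g))) > 0"
      then have "ereal g \<le> gamma_exp b \<psi>" unfolding gamma_exp_def by (intro Sup_upper) auto
      with g show False by simp
    qed
    then have "eventually (\<lambda>N::real. ereal (real (count_C N b \<psi>) * N powr (- g)) < 1) at_top"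
      by (intro Limsup_lessD) (simp add: not_less le_less_trans)
    then obtain N0 where N0: "\<And>N. N \<ge> N0 \<Longrightarrow> real (count_C N b \<psi>) * N powr (- g) < 1"
      by (auto simp: eventually_at_top_linorder)
    obtain dz where dz: "max N0 1 < k ^ dz" using real_arch_pow[OF k1] by blast
    have cnt: "real (card {q\<in>?A. vnorm q \<le> real CARD('a)^d}) \<le> 1 * real CARD('a) powr (g * real d)"
      if "d \<ge> dz" for d
    proof -
      have "k ^ dz \<le> k ^ d" using k1 that by (intro power_increasing) auto
      then have Nd: "k ^ d \<ge> N0" "k ^ d > 0" using dz by auto
      have eq: "{q\<in>?A. vnorm q \<le> real CARD('a)^d} = {q. q \<noteq> 0 \<and> vnorm q \<le> k^d \<and> \<psi> q \<ge> vnorm q powr (-b)}"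
        by (auto simp: k_def)
      have p: "(k^d) powr g > 0" using Nd(2) powr_gt_zero[of "k^d" g] by linarith
      have "real (count_C (k^d) b \<psi>) * (k^d) powr (- g) < 1" using N0[OF Nd(1)] .
      then have "real (count_C (k^d) b \<psi>) / (k^d) powr g < 1" by (simp add: powr_minus divide_inverse)
      then have "real (count_C (k^d) b \<psi>) < (k^d) powr g"
        using p by (simp add: pos_divide_less_eq)
      also have "(k^d) powr g = k powr (g * real d)"
        using k1 by (simp add: powr_realpow[symmetric] powr_powr mult.commute)
      finally show ?thesis unfolding eq count_C_def by (simp add: k_def)
    qed
    define s where "s = (a+1)*e - real n"
    define Y where "Y = (a+1)*(e - e')"
    define Z where "Z = e'*(b-a)"
    define c where "c = e - e'"
    have "s - g > Y - Z" using g unfolding s_def Y_def Z_def by (simp add: algebra_simps)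
    moreover have "c > 0" using de by (simp add: c_def)
    moreover have "Y \<ge> c" unfolding Y_def c_def using mult_nonneg_nonneg[of a "e-e'"] ab de by (simp add: algebra_simps)
    moreover have "Z \<le> c/2" unfolding Z_def c_def using ab by simp
    ultimately have gs: "g < s" by linarith
    have "(\<lambda>q. vnorm q powr (-s)) summable_on ?A"
      by (rule sum_lemma[OF _ cnt gs]) auto
    then have sS: "(\<lambda>q. vnorm q powr (-s)) summable_on ?S" using sub by (rule summable_on_subset)
    show ?thesis
    proof (rule summable_on_comparison_test[OF sS])
      fix q assume q: "q \<in> ?S"
      have "vnorm q \<ge> 1" using q vnorm_ge1 by blast
      then have "vnorm q ^ n * (\<psi> q / vnorm q) powr e \<le> vnorm q powr (real n - (a+1)*e)"
        using q psi_nn de by (intro fbound) auto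
      then show "vnorm q ^ n * (\<psi> q / vnorm q) powr e \<le> vnorm q powr (-s)" by (simp add: s_def)
      show "0 \<le> vnorm q ^ n * (\<psi> q / vnorm q) powr e" using vnorm_nonneg[of q] by simp
    qed
  qed
qed

lemma all_summable:
  "(\<lambda>q. vnorm q powr (- (real CARD('m) + 1))) summable_on (UNIV - {0::'a::{finite,field} poly ^ 'm::finite})"
proof (rule sum_lemma[where dz=0 and C="real CARD('a) ^ CARD('m)" and g="real CARD('m)"])
  fix d :: nat
  define k where "k = real CARD('a)"
  have k1: "k > 1" using card_ge2[where 'a='a] by (simp add: k_def)
  have "card {q \<in> UNIV - {0::'a poly ^ 'm}. vnorm q \<le> k^d} \<le> card {q::'a poly ^ 'm. vnorm q \<le> k^d}"
    using vball_card[where 'a='a and 'm='m and D=d] by (intro card_mono) (auto simp: k_def)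
  also have "\<dots> \<le> CARD('a) ^ ((d+1) * CARD('m))" using vball_card[where 'a='a and 'm='m and D=d] by (simp add: k_def)
  finally have "real (card {q \<in> UNIV - {0::'a poly ^ 'm}. vnorm q \<le> k^d}) \<le> k ^ ((d+1) * CARD('m))"
    unfolding k_def of_nat_power[symmetric] of_nat_le_iff .
  also have "k ^ ((d+1) * CARD('m)) = k ^ CARD('m) * k powr (real CARD('m) * real d)"
    using k1 by (simp add: powr_realpow[symmetric] powr_add[symmetric] algebra_simps)
  finally show "real (card {q \<in> UNIV - {0::'a poly ^ 'm}. vnorm q \<le> real CARD('a)^d})
     \<le> real CARD('a) ^ CARD('m) * real CARD('a) powr (real CARD('m) * real d)" by (simp add: k_def)
qed auto

lemma main_summable:
  fixes \<psi> :: "('a::{finite,field} poly ^ 'm::finite) \<Rightarrow> real" and n :: nat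
  assumes H: "\<And>v. v \<ge> 0 \<Longrightarrow> delta_v n v \<psi> \<le> ereal d"
    and de: "d < e'" "e' < e" "0 < e'"
    and psi_nn: "\<And>q. \<psi> q \<ge> 0"
    and le1: "\<And>q. \<psi> q \<le> 1"
  shows "(\<lambda>q. vnorm q ^ n * (\<psi> q / vnorm q) powr e) summable_on (UNIV - {0})"
proof -
  let ?f = "\<lambda>q. vnorm q ^ n * (\<psi> q / vnorm q) powr e"
  define h where "h = (e - e') / (2 * e')"
  have h: "h > 0" "e' * h = (e - e') / 2" using de by (auto simp: h_def)
  define A where "A j = {q. q \<noteq> 0 \<and> \<psi> q \<ge> vnorm q powr (- (real j * h))}" for j :: nat
  let ?S = "\<lambda>a b. {q. q \<noteq> 0 \<and> \<psi> q \<ge> vnorm q powr (-b) \<and> \<psi> q \<le> vnorm q powr (-a)}"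
  have binS: "?f summable_on ?S a b" if "0 \<le> a" "a \<le> b" "b \<le> a + h" for a b
  proof (rule bin_lemma[OF H de psi_nn])
    have "e' * (b - a) \<le> e' * h" using that de by (intro mult_left_mono) auto
    then show "e' * (b - a) \<le> (e - e') / 2" using h by simp
  qed (use that in auto)
  have sumA: "?f summable_on A j" for j
  proof (induction j)
    case 0
    have sub0: "A 0 \<subseteq> ?S 0 0"
    proof
      fix q assume "q \<in> A 0"
      then have "q \<noteq> 0" "\<psi> q \<ge> vnorm q powr (- (real 0 * h))" by (auto simp: A_def)
      moreover have "vnorm q \<noteq> 0" using vnorm_ge1[OF \<open>q \<noteq> 0\<close>] by simp
      ultimately show "q \<in> ?S 0 0" using le1[of q] by simp
    qed
    have "?f summable_on ?S 0 0" using h by (intro binS) auto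
    from summable_on_subset[OF this sub0] show ?case .
  next
    case (Suc j)
    have "A (Suc j) \<subseteq> A j \<union> ?S (real j * h) (real (Suc j) * h)"
      unfolding A_def by auto
    moreover have "?f summable_on ?S (real j * h) (real (Suc j) * h)"
      using h by (intro binS) (auto simp: algebra_simps)
    ultimately show ?case using summable_on_subset[OF summable_on_union[OF Suc.IH]] by blast
  qed
  define m where "m = real CARD('m)"
  obtain M :: nat where M: "(real n + m + 1) / e < real M * h"
    using ex_less_of_nat_mult[OF h(1)] by blast
  define W where "W = real M * h"
  let ?T = "{q. q \<noteq> 0 \<and> \<psi> q < vnorm q powr (-W)}"
  have sumT: "?f summable_on ?T"
  proof (rule summable_on_comparison_test[OF summable_on_subset[OF all_summable[where 'a='a and 'm='m]]])
    show "?T \<subseteq> UNIV - {0}" by auto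
    fix q assume q: "q \<in> ?T"
    have x1: "vnorm q \<ge> 1" using q vnorm_ge1 by blast
    have "W \<ge> 0" using h by (simp add: W_def)
    have "?f q \<le> vnorm q powr (real n - (W+1)*e)"
      using q psi_nn de x1 by (intro fbound) auto
    also have "\<dots> \<le> vnorm q powr (- (real CARD('m) + 1))"
    proof (intro powr_mono x1)
      have "(real n + m + 1) < W * e" using M de by (simp add: W_def divide_less_eq mult.commute)
      then show "real n - (W+1)*e \<le> - (real CARD('m) + 1)" using de by (simp add: m_def algebra_simps)
    qed
    finally show "?f q \<le> vnorm q powr (- (real CARD('m) + 1))" .
    show "0 \<le> ?f q" using vnorm_nonneg[of q] by simp
  qed
  have "UNIV - {0} \<subseteq> ?T \<union> A M" unfolding A_def W_def by auto
  then show ?thesis using summable_on_subset[OF summable_on_union[OF sumT sumA[of M]]] by blast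
qed

theorem lemma13:
  fixes n :: nat and \<psi> :: "('a::{finite,field} poly ^ 'm::finite) \<Rightarrow> real"
  assumes vals: "\<And>q. \<psi> q = 0 \<or> (\<exists>r::int. \<psi> q = real CARD('a) powi r)"
    and le1: "\<And>q. \<psi> q \<le> 1"
    and inf: "infinite {q. \<psi> q > 0}"
  shows "min (delta_exp n \<psi>) (ereal (real n)) \<ge> min (eta_exp n \<psi>) (ereal (real n))"
proof -
  have kpos: "real CARD('a) > 0" using card_ge2[where 'a='a] by simp
  have psi_nn: "\<psi> q \<ge> 0" for q
    using vals[of q] kpos by auto
  have Hv: "delta_v n v \<psi> \<le> delta_exp n \<psi>" if "v \<ge> 0" for v
    unfolding delta_exp_def using that by (intro SUP_upper) auto
  have d0: "0 \<le> delta_v n 0 \<psi>"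
  proof (cases "filterlim (\<lambda>N::real. real (count_C N 0 \<psi>)) at_top at_top")
    case True
    have ev1: "eventually (\<lambda>N::real. 1 \<le> real (count_C N 0 \<psi>)) at_top"
      using True unfolding filterlim_at_top by blast
    have "eventually (\<lambda>N::real. ereal 1 \<le> ereal (real (count_C N 0 \<psi>) * N powr (- 0))) at_top"
      using ev1 eventually_gt_at_top[of "0::real"]
      by eventually_elim auto
    then have L: "ereal 1 \<le> Limsup at_top (\<lambda>N::real. ereal (real (count_C N 0 \<psi>) * N powr (- 0)))"
      by (intro le_Limsup) auto
    have "(0::real) \<in> {g::real. Limsup at_top (\<lambda>N::real. ereal (real (count_C N 0 \<psi>) * N powr (- g))) > 0}"
      using less_le_trans[OF _ L] by simp
    then have "ereal 0 \<le> gamma_exp 0 \<psi>" unfolding gamma_exp_def by (intro Sup_upper) auto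
    then have "0 \<le> ereal (real n) + gamma_exp 0 \<psi>"
      using add_nonneg_nonneg[of "ereal (real n)" "gamma_exp 0 \<psi>"] by (simp add: zero_ereal_def)
    then show ?thesis unfolding delta_v_def using True by (simp add: one_ereal_def[symmetric])
  next
    case False then show ?thesis unfolding delta_v_def by simp
  qed
  have dpos: "0 \<le> delta_exp n \<psi>" using d0 Hv[of 0] by simp
  show ?thesis
  proof (cases "delta_exp n \<psi> \<ge> ereal (real n)")
    case True then show ?thesis by (simp add: min_def)
  next
    case False
    then obtain d where d: "delta_exp n \<psi> = ereal d" "0 \<le> d" "d < real n"
      using dpos by (cases "delta_exp n \<psi>") auto
    have eta_le: "eta_exp n \<psi> \<le> ereal e" if "d < e" "e < real n" for e
    proof -
      define e' where "e' = (d + e) / 2"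
      have "(\<lambda>q. vnorm q ^ n * (\<psi> q / vnorm q) powr e) summable_on (UNIV - {0})"
        using Hv d that psi_nn le1 by (intro main_summable[where d=d and e'=e']) (auto simp: e'_def)
      then show ?thesis unfolding eta_exp_def by (intro Inf_lower) auto
    qed
    have "eta_exp n \<psi> \<le> ereal d"
    proof (rule dense_ge_bounded[of "ereal d" "ereal (real n)"])
      show "ereal d < ereal (real n)" using d by simp
      fix w assume w: "ereal d < w" "w < ereal (real n)"
      then obtain e where "w = ereal e" by (cases w) auto
      then show "eta_exp n \<psi> \<le> w" using w eta_le by auto
    qed
    moreover have "ereal d \<le> ereal (real n)" using d by simp
    ultimately have "eta_exp n \<psi> \<le> ereal (real n)" by (rule order_trans)
    then show ?thesis using d \<open>eta_exp n \<psi> \<le> ereal d\<close> by (simp add: min_def)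
  qed
qed

end
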